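(* Let $G=(V,E)$ be a surjective-only finite simple graph with incidence matrix $A$, and let $\lambda\in\mathbb{R}_{>0}^n$ be such that the matching problem $(G,\lambda)$ is stabilizable. Let $\Pi_{\ge0}=\{\mu\in\mathbb{R}_{\ge0}^m:A\mu=\lambda\}$. For $\mu\in\Pi_{\ge0}$, let $\underline{E}=\{k\in E:\mu_k>0\}$ and $\underline{G}=(V,\underline{E})$. Then $\mu$ is a vertex of the polytope $\Pi_{\ge0}$ if and only if $\underline{G}$ is injective.
   Context: Incidence matrix: $a_{i,k}=1$ iff node $i$ is an endpoint of edge $e_k$. A graph is injective if the linear map $y\mapsto Ay$ defined by its incidence matrix is injective, equivalently every connected component is a tree or a unicyclic graph whose cycle is odd. Surjective-only: every connected component is non-bipartite and the graph is not injective. A vertex of a convex polytope $\Upsilon$ is a point $y\in\Upsilon$ that cannot be written as a convex combination of points of $\Upsilon\setminus\{y\}$. Stabilizability of $(G,\lambda)$ (existence of a policy making the matching Markov chain positive recurrent) is, for surjective $G$, equivalent to the existence of $\mu\in\mathbb{R}_{>0}^m$ with $A\mu=\lambda$. *)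

theory Defs
  imports Complex_Main
begin

text \<open>Vectors in R^m (indexed by edges) are functions 'v set => real that vanish off E;
  vectors in R^n (indexed by nodes) are functions 'v => real considered on V.\<close>

definition simple_graph :: "'v set \<Rightarrow> 'v set set \<Rightarrow> bool" where
  "simple_graph V E \<longleftrightarrow> finite V \<and> (\<forall>e\<in>E. \<exists>a b. a \<in> V \<and> b \<in> V \<and> a \<noteq> b \<and> e = {a, b})"

text \<open>(A y)_i = sum of y_k over edges k incident to node i (incidence matrix a_{ik} = 1 iff i \<in> e_k).\<close>
definition incid_apply :: "'v set set \<Rightarrow> ('v set \<Rightarrow> real) \<Rightarrow> 'v \<Rightarrow> real" where
  "incid_apply E y i = (\<Sum>k\<in>{k\<in>E. i \<in> k}. y k)"

definition edge_vec :: "'v set set \<Rightarrow> ('v set \<Rightarrow> real) \<Rightarrow> bool" where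
  "edge_vec E y \<longleftrightarrow> (\<forall>k. k \<notin> E \<longrightarrow> y k = 0)"

definition injective_graph :: "'v set \<Rightarrow> 'v set set \<Rightarrow> bool" where
  "injective_graph V E \<longleftrightarrow>
     (\<forall>y z. edge_vec E y \<longrightarrow> edge_vec E z \<longrightarrow>
        (\<forall>i\<in>V. incid_apply E y i = incid_apply E z i) \<longrightarrow> y = z)"

definition adjacent :: "'v set set \<Rightarrow> 'v \<Rightarrow> 'v \<Rightarrow> bool" where
  "adjacent E a b \<longleftrightarrow> {a, b} \<in> E"

definition component :: "'v set \<Rightarrow> 'v set set \<Rightarrow> 'v \<Rightarrow> 'v set" where
  "component V E v = {u \<in> V. (adjacent E)\<^sup>*\<^sup>* v u}"

definition bipartite_on :: "'v set set \<Rightarrow> 'v set \<Rightarrow> bool" where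
  "bipartite_on E C \<longleftrightarrow> (\<exists>f :: 'v \<Rightarrow> bool. \<forall>a b. {a, b} \<in> E \<longrightarrow> a \<in> C \<longrightarrow> b \<in> C \<longrightarrow> f a \<noteq> f b)"

definition surjective_only :: "'v set \<Rightarrow> 'v set set \<Rightarrow> bool" where
  "surjective_only V E \<longleftrightarrow>
     (\<forall>v\<in>V. \<not> bipartite_on E (component V E v)) \<and> \<not> injective_graph V E"

text \<open>Stabilizability, via the characterization valid for surjective graphs (given in the context):
  existence of \<mu> > 0 on E with A \<mu> = \<lambda>.\<close>
definition stabilizable :: "'v set \<Rightarrow> 'v set set \<Rightarrow> ('v \<Rightarrow> real) \<Rightarrow> bool" where
  "stabilizable V E lam \<longleftrightarrow>
     (\<exists>\<mu>. edge_vec E \<mu> \<and> (\<forall>k\<in>E. \<mu> k > 0) \<and> (\<forall>i\<in>V. incid_apply E \<mu> i = lam i))"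

definition Pi_nonneg :: "'v set \<Rightarrow> 'v set set \<Rightarrow> ('v \<Rightarrow> real) \<Rightarrow> ('v set \<Rightarrow> real) set" where
  "Pi_nonneg V E lam = {\<mu>. edge_vec E \<mu> \<and> (\<forall>k\<in>E. \<mu> k \<ge> 0) \<and> (\<forall>i\<in>V. incid_apply E \<mu> i = lam i)}"

definition is_vertex :: "('e \<Rightarrow> real) set \<Rightarrow> ('e \<Rightarrow> real) \<Rightarrow> bool" where
  "is_vertex U y \<longleftrightarrow> y \<in> U \<and>
     \<not> (\<exists>S c. finite S \<and> S \<subseteq> U - {y} \<and> (\<forall>x\<in>S. c x \<ge> (0::real)) \<and> sum c S = 1 \<and>
            y = (\<lambda>k. \<Sum>x\<in>S. c x * x k))"

end

theory Submission
  imports Defs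
begin

lemma incid_restrict:
  assumes "finite E" "F \<subseteq> E" "edge_vec F y"
  shows "incid_apply F y i = incid_apply E y i"
  unfolding incid_apply_def
proof (rule sum.mono_neutral_left)
  show "finite {k \<in> E. i \<in> k}" using assms(1) by simp
  show "{k \<in> F. i \<in> k} \<subseteq> {k \<in> E. i \<in> k}" using assms(2) by auto
  show "\<forall>k\<in>{k \<in> E. i \<in> k} - {k \<in> F. i \<in> k}. y k = 0"
    using assms(3) unfolding edge_vec_def by auto
qed

lemma incid_lin:
  "incid_apply E (\<lambda>k. a k + e * d k) i = incid_apply E a i + e * incid_apply E d i"
  unfolding incid_apply_def by (simp add: sum.distrib sum_distrib_left)

lemma finite_E:
  assumes "simple_graph V E" shows "finite E"
proof -
  have "E \<subseteq> Pow V"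
  proof
    fix e assume "e \<in> E"
    then obtain a b where "a \<in> V" "b \<in> V" "e = {a, b}"
      using assms unfolding simple_graph_def by meson
    then show "e \<in> Pow V" by simp
  qed
  moreover have "finite V" using assms unfolding simple_graph_def by simp
  ultimately show ?thesis using finite_subset[of E "Pow V"] by simp
qed

theorem proposition5p6:
  fixes V :: "'v set" and E :: "'v set set" and lam :: "'v \<Rightarrow> real" and \<mu> :: "'v set \<Rightarrow> real"
  assumes "simple_graph V E"
    and "surjective_only V E"
    and "\<forall>i\<in>V. lam i > 0"
    and "stabilizable V E lam"
    and "\<mu> \<in> Pi_nonneg V E lam"
  shows "is_vertex (Pi_nonneg V E lam) \<mu> \<longleftrightarrow> injective_graph V {k\<in>E. \<mu> k > 0}"
proof -
  define F where "F = {k\<in>E. \<mu> k > 0}"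
  define P where "P = Pi_nonneg V E lam"
  have finE: "finite E" using finite_E[OF assms(1)] .
  have FE: "F \<subseteq> E" unfolding F_def by auto
  have finF: "finite F" using finE FE finite_subset by blast
  have muP: "\<mu> \<in> P" using assms(5) P_def by simp
  have muE: "edge_vec E \<mu>" and mu0: "\<forall>k\<in>E. \<mu> k \<ge> 0" and muA: "\<forall>i\<in>V. incid_apply E \<mu> i = lam i"
    using muP unfolding P_def Pi_nonneg_def by auto
  have muF: "edge_vec F \<mu>" using muE mu0 unfolding edge_vec_def F_def by force
  show ?thesis unfolding F_def[symmetric] P_def[symmetric]
  proof
    assume vert: "is_vertex P \<mu>"
    show "injective_graph V F"
      unfolding injective_graph_def
    proof (intro allI impI, rule ccontr)
      fix y z
      assume yF: "edge_vec F y" and zF: "edge_vec F z"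
        and eq: "\<forall>i\<in>V. incid_apply F y i = incid_apply F z i" and ne: "y \<noteq> z"
      define d where "d = (\<lambda>k. y k - z k)"
      have dF: "edge_vec F d" using yF zF unfolding edge_vec_def d_def by auto
      have dA: "\<forall>i\<in>V. incid_apply E d i = 0"
      proof
        fix i assume "i \<in> V"
        have "incid_apply F d i = incid_apply F y i - incid_apply F z i"
          unfolding incid_apply_def d_def by (simp add: sum_subtractf)
        then have "incid_apply F d i = 0" using eq \<open>i \<in> V\<close> by simp
        then show "incid_apply E d i = 0" using incid_restrict[OF finE FE dF] by simp
      qed
      have dne: "d \<noteq> (\<lambda>k. 0)" using ne unfolding d_def by (auto simp: fun_eq_iff)
      define \<epsilon> where "\<epsilon> = Min (insert 1 ((\<lambda>k. \<mu> k / (\<bar>d k\<bar> + 1)) ` F))"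
      have finI: "finite (insert 1 ((\<lambda>k. \<mu> k / (\<bar>d k\<bar> + 1)) ` F))" using finF by simp
      have epos: "\<epsilon> > 0"
      proof -
        have "\<forall>a\<in>insert 1 ((\<lambda>k. \<mu> k / (\<bar>d k\<bar> + 1)) ` F). 0 < a"
        proof
          fix a assume "a \<in> insert 1 ((\<lambda>k. \<mu> k / (\<bar>d k\<bar> + 1)) ` F)"
          then consider "a = 1" | k where "k \<in> F" "a = \<mu> k / (\<bar>d k\<bar> + 1)" by blast
          then show "0 < a"
          proof cases
            case 1 then show ?thesis by simp
          next
            case 2
            then have "\<mu> k > 0" unfolding F_def by blast
            moreover have "\<bar>d k\<bar> + 1 > 0" by linarith
            ultimately show ?thesis using 2 by simp
          qed
        qed
        then show ?thesis unfolding \<epsilon>_def using finI by (simp add: Min_gr_iff)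
      qed
      have ele: "\<epsilon> \<le> \<mu> k / (\<bar>d k\<bar> + 1)" if "k \<in> F" for k
        unfolding \<epsilon>_def using finI that by (intro Min_le) auto
      have bnd: "\<epsilon> * \<bar>d k\<bar> \<le> \<mu> k" if "k \<in> F" for k
      proof -
        have "\<epsilon> * (\<bar>d k\<bar> + 1) \<le> \<mu> k" using ele[OF that]
          by (simp add: pos_le_divide_eq add_pos_nonneg)
        then show ?thesis using epos by (simp add: algebra_simps)
      qed
      have inP: "(\<lambda>k. \<mu> k + s * d k) \<in> P" if "s = \<epsilon> \<or> s = - \<epsilon>" for s
        unfolding P_def Pi_nonneg_def
      proof (intro CollectI conjI ballI)
        show "edge_vec E (\<lambda>k. \<mu> k + s * d k)" using muE dF FE unfolding edge_vec_def by auto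
      next
        fix k assume "k \<in> E"
        show "0 \<le> \<mu> k + s * d k"
        proof (cases "k \<in> F")
          case True
          have "\<bar>s * d k\<bar> \<le> \<mu> k" using bnd[OF True] that epos by (auto simp: abs_mult)
          then show ?thesis by linarith
        next
          case False
          then show ?thesis using dF \<open>k \<in> E\<close> mu0 unfolding edge_vec_def by auto
        qed
      next
        fix i assume "i \<in> V"
        show "incid_apply E (\<lambda>k. \<mu> k + s * d k) i = lam i"
          using incid_lin[of E \<mu> s d i] dA muA \<open>i \<in> V\<close> by simp
      qed
      obtain k0 where k0: "d k0 \<noteq> 0" using dne by (auto simp: fun_eq_iff)
      define p where "p = (\<lambda>k. \<mu> k + \<epsilon> * d k)"
      define q where "q = (\<lambda>k. \<mu> k + (- \<epsilon>) * d k)"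
      have pP: "p \<in> P" unfolding p_def by (rule inP) simp
      have qP: "q \<in> P" unfolding q_def by (rule inP) simp
      have pne: "p \<noteq> \<mu>" using k0 epos unfolding p_def by (auto simp: fun_eq_iff)
      have qne: "q \<noteq> \<mu>" using k0 epos unfolding q_def by (auto simp: fun_eq_iff)
      have pq: "p \<noteq> q" using k0 epos unfolding p_def q_def by (auto simp: fun_eq_iff)
      have comb: "\<mu> = (\<lambda>k. \<Sum>x\<in>{p, q}. (\<lambda>_. 1/2) x * x k)"
      proof
        fix k
        have "(\<Sum>x\<in>{p, q}. (\<lambda>_. 1/2::real) x * x k) = 1/2 * p k + 1/2 * q k"
          using pq by simp
        also have "\<dots> = \<mu> k" unfolding p_def q_def by (simp add: algebra_simps)
        finally show "\<mu> k = (\<Sum>x\<in>{p, q}. (\<lambda>_. 1/2::real) x * x k)" by simp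
      qed
      have "\<exists>S c. finite S \<and> S \<subseteq> P - {\<mu>} \<and> (\<forall>x\<in>S. c x \<ge> (0::real)) \<and> sum c S = 1 \<and>
            \<mu> = (\<lambda>k. \<Sum>x\<in>S. c x * x k)"
      proof (intro exI conjI)
        show "finite {p, q}" by simp
        show "{p, q} \<subseteq> P - {\<mu>}" using pP qP pne qne by blast
        show "\<forall>x\<in>{p, q}. (\<lambda>_. 1/2::real) x \<ge> 0" by simp
        show "sum (\<lambda>_. 1/2::real) {p, q} = 1" using pq by simp
        show "\<mu> = (\<lambda>k. \<Sum>x\<in>{p, q}. (\<lambda>_. 1/2) x * x k)" by (rule comb)
      qed
      then show False using vert unfolding is_vertex_def by blast
    qed
  next
    assume inj: "injective_graph V F"
    show "is_vertex P \<mu>" unfolding is_vertex_def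
    proof (intro conjI notI)
      show "\<mu> \<in> P" using muP .
    next
      assume "\<exists>S c. finite S \<and> S \<subseteq> P - {\<mu>} \<and> (\<forall>x\<in>S. c x \<ge> (0::real)) \<and> sum c S = 1 \<and>
            \<mu> = (\<lambda>k. \<Sum>x\<in>S. c x * x k)"
      then obtain S c where finS: "finite S" and SP: "S \<subseteq> P - {\<mu>}" and c0: "\<forall>x\<in>S. c x \<ge> 0"
        and c1: "sum c S = 1" and mueq: "\<mu> = (\<lambda>k. \<Sum>x\<in>S. c x * x k)" by blast
      obtain x where xS: "x \<in> S" and cx: "c x > 0"
      proof -
        have "\<exists>x\<in>S. c x \<noteq> 0" using c1 by (metis sum.neutral zero_neq_one)
        then show ?thesis using c0 that by force
      qed
      have xP: "x \<in> P" and xmu: "x \<noteq> \<mu>" using SP xS by auto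
      have xE: "edge_vec E x" and x0: "\<forall>k\<in>E. x k \<ge> 0" and xA: "\<forall>i\<in>V. incid_apply E x i = lam i"
        using xP unfolding P_def Pi_nonneg_def by auto
      have xF: "edge_vec F x" unfolding edge_vec_def
      proof (intro allI impI)
        fix k assume kF: "k \<notin> F"
        show "x k = 0"
        proof (cases "k \<in> E")
          case False then show ?thesis using xE unfolding edge_vec_def by auto
        next
          case True
          then have "\<mu> k = 0" using kF mu0 unfolding F_def by force
          then have s0: "(\<Sum>y\<in>S. c y * y k) = 0" using fun_cong[OF mueq, of k] by simp
          have nn: "\<forall>y\<in>S. 0 \<le> c y * y k"
          proof
            fix y assume "y \<in> S"
            then have "y \<in> P" using SP by auto
            then have "y k \<ge> 0" using True unfolding P_def Pi_nonneg_def by auto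
            then show "0 \<le> c y * y k" using c0 \<open>y \<in> S\<close> by simp
          qed
          have all0: "\<forall>y\<in>S. c y * y k = 0"
            using sum_nonneg_eq_0_iff[of S "\<lambda>y. c y * y k", OF finS] nn s0 by blast
          have "c x * x k = 0" using all0 xS by blast
          then show ?thesis using cx by simp
        qed
      qed
      have "\<forall>i\<in>V. incid_apply F x i = incid_apply F \<mu> i"
        using incid_restrict[OF finE FE xF] incid_restrict[OF finE FE muF] xA muA by simp
      then have "x = \<mu>" using inj xF muF unfolding injective_graph_def by blast
      then show False using xmu by simp
    qed
  qed
qed

end
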